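(* If $(m,n)\in\mathcal{P}_\lambda$, then $(m+k,n)\in\mathcal{P}_\lambda$ and $(m,n+k)\in\mathcal{P}_\lambda$ for every $k\in\mathbb{Z}_+$. Likewise, if $(m,n)\in\overline{\mathcal{P}}_\lambda$, then $(m+k,n)\in\overline{\mathcal{P}}_\lambda$ and $(m,n+k)\in\overline{\mathcal{P}}_\lambda$ for every $k\in\mathbb{Z}_+$.
   Context: Fix $p\in(0,1)$, $q\in[0,1]$, $\lambda>0$. $\mathbb{Z}_+=\{0,1,2,\dots\}$. Let $d:[0,\infty)\to\mathbb{R}$ satisfy: (C1) $d(0)>0$; (C2) $d$ is convex and increasing; (C3) for every $\delta>0$, $r\mapsto d(r+\delta)-d(r)$ increases to $\infty$ as $r\to\infty$. Write $d(x,y):=d(\sqrt{x^2+y^2})$ for $(x,y)\in\mathbb{R}^2$ (so $d(1)=d(1,0)=d(0,1)$), and assume (C4): $d(x,y)$ is positive, twice continuously partially differentiable, with $d_{xx},d_{xy},d_{yy}>0$ for all $x,y\ge0$. Set $\Delta_1(m,n)=d(m+1,n)-d(m,n)$, $\Delta_2(m,n)=d(m,n+1)-d(m,n)$, $\Delta_q(m,n)=q\Delta_1(m,n)+(1-q)\Delta_2(m,n)$ for $(m,n)\in\mathbb{Z}_+^2$. Relay placement MDP: the state space is $\{(m,n,z):(m,n)\in\mathbb{Z}_+^2,\ z\in\{\mathsf e,\mathsf c\}\}\cup\{\phi\}$ ($(m,n)$ is the displacement of the deploying agent from the last placed relay, or from the origin if none; $z=\mathsf e$ means the lattice path has ended,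 $z=\mathsf c$ that it continues). Actions $u\in\{0,1\}$ ($u=1$: place a relay). From $(m,n,\mathsf c)$ with $u=0$ the next state is $(m+1,n,\mathsf c)$ w.p. $(1-p)q$, $(m+1,n,\mathsf e)$ w.p. $pq$, $(m,n+1,\mathsf c)$ w.p. $(1-p)(1-q)$, $(m,n+1,\mathsf e)$ w.p. $p(1-q)$; with $u=1$ it is $(1,0,\mathsf c)$, $(1,0,\mathsf e)$, $(0,1,\mathsf c)$, $(0,1,\mathsf e)$ with these same respective probabilities. At $(m,n,\mathsf e)$ only $u=1$ is allowed and the next state is the absorbing cost-free state $\phi$. One-step cost: $d(m,n)$ at $(m,n,\mathsf e)$; $\lambda+d(m,n)$ if $u=1$ at $(m,n,\mathsf c)$; $0$ otherwise. $J_\lambda(m,n)$ is the optimal expected total cost (infimum over all, possibly history-dependent and randomized, policies) starting from $(m,n,\mathsf c)$; it satisfies the Bellman equation $J_\lambda(m,n)=\min\{c_p(m,n),c_{np}(m,n)\}$, where $c_p(m,n)=\lambda+d(m,n)+(1-p)(1-q)J_\lambda(0,1)+(1-p)qJ_\lambda(1,0)+p\,d(1)$ and $c_{np}(m,n)=(1-p)qJ_\lambda(m+1,n)+(1-p)(1-q)J_\lambda(m,n+1)+pq\,d(m+1,n)+p(1-q)\,d(m,n+1)$. The optimal placement set is $\mathcal{P}_\lambda=\{(m,n)\in\mathbb{Z}_+^2: c_p(m,n)\le c_{np}(m,n)\}$. The one-step-look-ahead (OSLA) placement set is $\overline{\mathcal{P}}_\lambda=\{(m,n)\in\mathbb{Z}_+^2: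 p(\lambda+J_\lambda(0,0))\le \Delta_q(m,n)\}$. *)

theory Defs
  imports "HOL-Analysis.Analysis"
begin

definition dd :: "(real \<Rightarrow> real) \<Rightarrow> real \<Rightarrow> real \<Rightarrow> real" where
  "dd d x y = d (sqrt (x\<^sup>2 + y\<^sup>2))"

definition C1 :: "(real \<Rightarrow> real) \<Rightarrow> bool" where
  "C1 d \<longleftrightarrow> d 0 > 0"

definition C2 :: "(real \<Rightarrow> real) \<Rightarrow> bool" where
  "C2 d \<longleftrightarrow> convex_on {0..} d \<and> mono_on {0..} d"

definition C3 :: "(real \<Rightarrow> real) \<Rightarrow> bool" where
  "C3 d \<longleftrightarrow> (\<forall>\<delta>>0. mono_on {0..} (\<lambda>r. d (r + \<delta>) - d r) \<and>
                   filterlim (\<lambda>r. d (r + \<delta>) - d r) at_top at_top)"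

definition C4 :: "(real \<Rightarrow> real) \<Rightarrow> bool" where
  "C4 d \<longleftrightarrow> (\<forall>x\<ge>0. \<forall>y\<ge>0. dd d x y > 0) \<and>
    (\<exists>D1 D2 D11 D12 D21 D22 :: real \<Rightarrow> real \<Rightarrow> real.
      (\<forall>x y. ((\<lambda>t. dd d t y) has_real_derivative D1 x y) (at x)) \<and>
      (\<forall>x y. ((\<lambda>t. dd d x t) has_real_derivative D2 x y) (at y)) \<and>
      (\<forall>x y. ((\<lambda>t. D1 t y) has_real_derivative D11 x y) (at x)) \<and>
      (\<forall>x y. ((\<lambda>t. D1 x t) has_real_derivative D12 x y) (at y)) \<and>
      (\<forall>x y. ((\<lambda>t. D2 t y) has_real_derivative D21 x y) (at x)) \<and>
      (\<forall>x y. ((\<lambda>t. D2 x t) has_real_derivative D22 x y) (at y)) \<and>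
      continuous_on UNIV (\<lambda>(x,y). D11 x y) \<and> continuous_on UNIV (\<lambda>(x,y). D12 x y) \<and>
      continuous_on UNIV (\<lambda>(x,y). D21 x y) \<and> continuous_on UNIV (\<lambda>(x,y). D22 x y) \<and>
      (\<forall>x\<ge>0. \<forall>y\<ge>0. D11 x y > 0 \<and> D22 x y > 0) \<and>
      (\<forall>x>0. \<forall>y>0. D12 x y > 0))"

datatype st = Cont nat nat | Ende nat nat | Phi

text \<open>Successor distribution when the agent's displacement after the action is (a,b):
  list of (probability, next state).\<close>
definition trans :: "real \<Rightarrow> real \<Rightarrow> nat \<Rightarrow> nat \<Rightarrow> (real \<times> st) list" where
  "trans p q a b = [((1-p)*q, Cont (a+1) b), (p*q, Ende (a+1) b),
                    ((1-p)*(1-q), Cont a (b+1)), (p*(1-q), Ende a (b+1))]"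

text \<open>A (history-dependent, randomized) policy maps the current state and the past
  history (list of (state, action taken), most recent first; True = place relay) to
  the probability of placing a relay.\<close>
type_synonym policy = "st \<Rightarrow> (st \<times> bool) list \<Rightarrow> real"

definition policies :: "policy set" where
  "policies = {\<pi>. \<forall>s hs. 0 \<le> \<pi> s hs \<and> \<pi> s hs \<le> 1}"

text \<open>Expected cost incurred in the next k steps under policy \<pi>, from current state s
  with past history hs.\<close>
fun Wk :: "(real \<Rightarrow> real) \<Rightarrow> real \<Rightarrow> real \<Rightarrow> real \<Rightarrow> policy \<Rightarrow> nat \<Rightarrow> st \<Rightarrow> (st \<times> bool) list \<Rightarrow> real" where
  "Wk d p q l \<pi> 0 s hs = 0"
| "Wk d p q l \<pi> (Suc k) s hs =
     (case s of
        Phi \<Rightarrow> 0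
      | Ende m n \<Rightarrow> dd d (real m) (real n)
      | Cont m n \<Rightarrow>
          \<pi> s hs * (l + dd d (real m) (real n) +
              (\<Sum>(pr, s')\<leftarrow>trans p q 0 0. pr * Wk d p q l \<pi> k s' ((s, True) # hs)))
          + (1 - \<pi> s hs) *
              (\<Sum>(pr, s')\<leftarrow>trans p q m n. pr * Wk d p q l \<pi> k s' ((s, False) # hs)))"

definition total_cost :: "(real \<Rightarrow> real) \<Rightarrow> real \<Rightarrow> real \<Rightarrow> real \<Rightarrow> policy \<Rightarrow> st \<Rightarrow> ereal" where
  "total_cost d p q l \<pi> s = (SUP k. ereal (Wk d p q l \<pi> k s []))"

text \<open>Optimal expected total cost from (m,n,c) (finite, hence taken as a real).\<close>
definition Jopt :: "(real \<Rightarrow> real) \<Rightarrow> real \<Rightarrow> real \<Rightarrow> real \<Rightarrow> nat \<Rightarrow> nat \<Rightarrow> real" where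
  "Jopt d p q l m n = real_of_ereal (INF \<pi>\<in>policies. total_cost d p q l \<pi> (Cont m n))"

definition c_p :: "(real \<Rightarrow> real) \<Rightarrow> real \<Rightarrow> real \<Rightarrow> real \<Rightarrow> nat \<Rightarrow> nat \<Rightarrow> real" where
  "c_p d p q l m n = l + dd d (real m) (real n) + (1-p)*(1-q) * Jopt d p q l 0 1
      + (1-p)*q * Jopt d p q l 1 0 + p * d 1"

definition c_np :: "(real \<Rightarrow> real) \<Rightarrow> real \<Rightarrow> real \<Rightarrow> real \<Rightarrow> nat \<Rightarrow> nat \<Rightarrow> real" where
  "c_np d p q l m n = (1-p)*q * Jopt d p q l (m+1) n + (1-p)*(1-q) * Jopt d p q l m (n+1)
      + p*q * dd d (real (m+1)) (real n) + p*(1-q) * dd d (real m) (real (n+1))"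

definition Pset :: "(real \<Rightarrow> real) \<Rightarrow> real \<Rightarrow> real \<Rightarrow> real \<Rightarrow> (nat \<times> nat) set" where
  "Pset d p q l = {(m,n). c_p d p q l m n \<le> c_np d p q l m n}"

definition Delta1 :: "(real \<Rightarrow> real) \<Rightarrow> nat \<Rightarrow> nat \<Rightarrow> real" where
  "Delta1 d m n = dd d (real (m+1)) (real n) - dd d (real m) (real n)"

definition Delta2 :: "(real \<Rightarrow> real) \<Rightarrow> nat \<Rightarrow> nat \<Rightarrow> real" where
  "Delta2 d m n = dd d (real m) (real (n+1)) - dd d (real m) (real n)"

definition Deltaq :: "(real \<Rightarrow> real) \<Rightarrow> real \<Rightarrow> nat \<Rightarrow> nat \<Rightarrow> real" where
  "Deltaq d q m n = q * Delta1 d m n + (1-q) * Delta2 d m n"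

definition OSLAset :: "(real \<Rightarrow> real) \<Rightarrow> real \<Rightarrow> real \<Rightarrow> real \<Rightarrow> (nat \<times> nat) set" where
  "OSLAset d p q l = {(m,n). p * (l + Jopt d p q l 0 0) \<le> Deltaq d q m n}"

end

theory Submission
  imports Defs
begin


definition sh :: "nat \<Rightarrow> nat \<Rightarrow> st \<Rightarrow> st" where
  "sh i j s = (case s of Cont m n \<Rightarrow> Cont (m+i) (n+j) | Ende m n \<Rightarrow> Ende (m+i) (n+j) | Phi \<Rightarrow> Phi)"

fun tr :: "nat \<Rightarrow> nat \<Rightarrow> (st \<times> bool) list \<Rightarrow> (st \<times> bool) list" where
  "tr i j [] = []"
| "tr i j ((s,a)#r) = ((if (\<exists>x\<in>set r. snd x) then s else sh i j s), a) # tr i j r"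

definition imit :: "policy \<Rightarrow> nat \<Rightarrow> nat \<Rightarrow> policy" where
  "imit \<sigma> i j = (\<lambda>s hs. \<sigma> (if (\<exists>x\<in>set hs. snd x) then s else sh i j s) (tr i j hs))"

lemma imit_pol: "\<sigma> \<in> policies \<Longrightarrow> imit \<sigma> i j \<in> policies"
  unfolding policies_def imit_def by auto

lemma L_unsh: "(\<exists>x\<in>set hs. snd x) \<Longrightarrow> Wk d p q l \<sigma> k s (tr i j hs) = Wk d p q l (imit \<sigma> i j) k s hs"
proof (induction k arbitrary: s hs)
  case 0 then show ?case by simp
next
  case (Suc k)
  have e: "\<sigma> s (tr i j hs) = imit \<sigma> i j s hs" using Suc.prems by (simp add: imit_def)
  have t: "\<And>b. tr i j ((s,b)#hs) = (s,b) # tr i j hs" using Suc.prems by simp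
  have IH: "\<And>s' b. Wk d p q l \<sigma> k s' ((s,b)# tr i j hs) = Wk d p q l (imit \<sigma> i j) k s' ((s,b)#hs)"
    using Suc.IH Suc.prems t by (metis list.set_intros(2))
  show ?case using IH e by (cases s) (simp_all add: t trans_def)
qed

lemma W_nonneg_mono:
  assumes pol: "\<pi> \<in> policies" and p: "0 \<le> p" "p \<le> 1" and q: "0 \<le> q" "q \<le> 1" and l: "l \<ge> 0"
    and dpos: "\<And>m n. dd d (real m) (real n) \<ge> 0"
  shows "Wk d p q l \<pi> k s hs \<le> Wk d p q l \<pi> (Suc k) s hs"
proof (induction k arbitrary: s hs)
  case 0
  have "0 \<le> \<pi> s hs" using pol by (auto simp: policies_def)
  then show ?case using dpos l by (cases s) (simp_all add: trans_def)
next
  case (Suc k)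
  have x: "0 \<le> \<pi> s hs" "\<pi> s hs \<le> 1" using pol by (auto simp: policies_def)
  have pr: "0 \<le> (1-p)*q" "0 \<le> p*q" "0 \<le> (1-p)*(1-q)" "0 \<le> p*(1-q)" using p q by auto
  show ?case
  proof (cases s)
    case (Cont m n)
    show ?thesis unfolding Cont
      apply (simp only: Wk.simps(2)[of _ _ _ _ _ k])
      apply (simp only: Wk.simps(2)[of _ _ _ _ _ "Suc k"] st.case trans_def list.map list.simps prod.case sum_list.Cons sum_list.Nil)
      apply (intro add_mono mult_left_mono order_refl Suc.IH pr)
      using x by (auto simp: Cont)
  qed simp_all
qed

lemma comb_arith:
  fixes x p q l D D' T C1 C1' C2 C2' E1 E1' E2 E2' e f g :: real
  assumes x: "0 \<le> x" "x \<le> 1" and p: "0 \<le> p" "p \<le> 1" and q: "0 \<le> q" "q \<le> 1"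
    and hD: "D' - D \<ge> g" and hC1: "C1' \<ge> C1 + e" and hC2: "C2' \<ge> C2 + e"
    and hE1: "E1' \<ge> E1 + f" and hE2: "E2' \<ge> E2 + f" and hg: "(1-p)*e + p*f \<ge> g"
  shows "x * (l + D' + T) + (1-x) * ((1-p)*q*C1' + (p*q*E1' + ((1-p)*(1-q)*C2' + p*(1-q)*E2')))
       \<ge> x * (l + D + T) + (1-x) * ((1-p)*q*C1 + (p*q*E1 + ((1-p)*(1-q)*C2 + p*(1-q)*E2))) + g"
proof -
  have a: "(1-p)*q*C1' \<ge> (1-p)*q*(C1+e)" using hC1 p q by (intro mult_left_mono) auto
  have b: "p*q*E1' \<ge> p*q*(E1+f)" using hE1 p q by (intro mult_left_mono) auto
  have c: "(1-p)*(1-q)*C2' \<ge> (1-p)*(1-q)*(C2+e)" using hC2 p q by (intro mult_left_mono) auto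
  have d: "p*(1-q)*E2' \<ge> p*(1-q)*(E2+f)" using hE2 p q by (intro mult_left_mono) auto
  have N: "((1-p)*q*C1' + (p*q*E1' + ((1-p)*(1-q)*C2' + p*(1-q)*E2')))
      \<ge> ((1-p)*q*C1 + (p*q*E1 + ((1-p)*(1-q)*C2 + p*(1-q)*E2))) + ((1-p)*e + p*f)"
    using a b c d by (simp add: algebra_simps)
  have N2: "(1-x)*((1-p)*q*C1' + (p*q*E1' + ((1-p)*(1-q)*C2' + p*(1-q)*E2')))
      \<ge> (1-x)*(((1-p)*q*C1 + (p*q*E1 + ((1-p)*(1-q)*C2 + p*(1-q)*E2))) + g)"
    using N hg x by (intro mult_left_mono) auto
  have P: "x * (l + D' + T) \<ge> x * (l + D + T + g)" using hD x by (intro mult_left_mono) auto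
  show ?thesis using N2 P by (simp add: algebra_simps)
qed

lemma L_sh:
  assumes pol: "\<sigma> \<in> policies" and p: "0 \<le> p" "p \<le> 1" and q: "0 \<le> q" "q \<le> 1"
    and incr: "\<And>m n. a \<le> m \<Longrightarrow> b \<le> n \<Longrightarrow> dd d (real (m+i)) (real (n+j)) - dd d (real m) (real n) \<ge> \<Delta>"
    and D0: "\<Delta> \<ge> 0"
  shows "a \<le> m \<Longrightarrow> b \<le> n \<Longrightarrow> \<not>(\<exists>x\<in>set hs. snd x) \<Longrightarrow>
    Wk d p q l \<sigma> k (Cont (m+i) (n+j)) (tr i j hs) \<ge> Wk d p q l (imit \<sigma> i j) k (Cont m n) hs + \<Delta>*(1-(1-p)^(k-1))"
proof (induction k arbitrary: m n hs)
  case 0 then show ?case by simp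
next
  case (Suc k)
  define S where "S = Cont (m+i) (n+j)"
  define H where "H = tr i j hs"
  define x where "x = \<sigma> S H"
  have x01: "0 \<le> x" "x \<le> 1" using pol by (auto simp: policies_def x_def)
  have xe: "imit \<sigma> i j (Cont m n) hs = x" using Suc.prems by (simp add: imit_def x_def S_def H_def sh_def)
  have trT: "\<And>b. tr i j ((Cont m n, b)#hs) = (S, b) # H" using Suc.prems by (simp add: S_def H_def sh_def)
  have A1: "\<And>s'. Wk d p q l \<sigma> k s' ((S,True)#H) = Wk d p q l (imit \<sigma> i j) k s' ((Cont m n,True)#hs)"
  proof -
    fix s'
    have "\<exists>x\<in>set ((Cont m n,True)#hs). snd x" by simp
    from L_unsh[OF this, of d p q l \<sigma> k s' i j] show "?thesis s'" unfolding trT .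
  qed
  have B1: "Wk d p q l \<sigma> k (Cont (m+i+1) (n+j)) ((S,False)#H) \<ge> Wk d p q l (imit \<sigma> i j) k (Cont (m+1) n) ((Cont m n,False)#hs) + \<Delta>*(1-(1-p)^(k-1))"
    using Suc.IH[of "m+1" n "(Cont m n,False)#hs"] Suc.prems trT by (simp add: ac_simps)
  have B2: "Wk d p q l \<sigma> k (Cont (m+i) (n+j+1)) ((S,False)#H) \<ge> Wk d p q l (imit \<sigma> i j) k (Cont m (n+1)) ((Cont m n,False)#hs) + \<Delta>*(1-(1-p)^(k-1))"
    using Suc.IH[of m "n+1" "(Cont m n,False)#hs"] Suc.prems trT by (simp add: ac_simps)
  have E1: "Wk d p q l \<sigma> k (Ende (m+i+1) (n+j)) ((S,False)#H) \<ge> Wk d p q l (imit \<sigma> i j) k (Ende (m+1) n) ((Cont m n,False)#hs) + (if k = 0 then 0 else \<Delta>)"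
    using incr[of "m+1" n] Suc.prems by (cases k) (simp_all add: ac_simps)
  have E2: "Wk d p q l \<sigma> k (Ende (m+i) (n+j+1)) ((S,False)#H) \<ge> Wk d p q l (imit \<sigma> i j) k (Ende m (n+1)) ((Cont m n,False)#hs) + (if k = 0 then 0 else \<Delta>)"
    using incr[of m "n+1"] Suc.prems by (cases k) (simp_all add: ac_simps)
  have hD: "dd d (real (m+i)) (real (n+j)) - dd d (real m) (real n) \<ge> \<Delta>*(1-(1-p)^(Suc k - 1))"
  proof -
    have "\<Delta>*(1-(1-p)^k) \<le> \<Delta>" using D0 p by (simp add: mult_left_le)
    then show ?thesis using incr[of m n] Suc.prems by simp
  qed
  have hg: "(1-p)*(\<Delta>*(1-(1-p)^(k-1))) + p*(if k = 0 then 0 else \<Delta>) \<ge> \<Delta>*(1-(1-p)^(Suc k - 1))"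
  proof (cases k)
    case 0 then show ?thesis by simp
  next
    case (Suc k') then show ?thesis by (simp add: algebra_simps)
  qed
  have L: "Wk d p q l \<sigma> (Suc k) (Cont (m+i) (n+j)) (tr i j hs) = x * (l + dd d (real (m+i)) (real (n+j)) +
      ((1-p)*q*Wk d p q l \<sigma> k (Cont 1 0) ((S,True)#H) + (p*q*Wk d p q l \<sigma> k (Ende 1 0) ((S,True)#H) +
       ((1-p)*(1-q)*Wk d p q l \<sigma> k (Cont 0 1) ((S,True)#H) + p*(1-q)*Wk d p q l \<sigma> k (Ende 0 1) ((S,True)#H)))))
    + (1-x) * ((1-p)*q*Wk d p q l \<sigma> k (Cont (m+i+1) (n+j)) ((S,False)#H) + (p*q*Wk d p q l \<sigma> k (Ende (m+i+1) (n+j)) ((S,False)#H) +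
       ((1-p)*(1-q)*Wk d p q l \<sigma> k (Cont (m+i) (n+j+1)) ((S,False)#H) + p*(1-q)*Wk d p q l \<sigma> k (Ende (m+i) (n+j+1)) ((S,False)#H))))"
    unfolding S_def[symmetric] H_def[symmetric] x_def
    by (simp only: Wk.simps(2) st.case trans_def list.map list.simps prod.case sum_list.Cons sum_list.Nil S_def add_0 add_0_right)
  have R: "Wk d p q l (imit \<sigma> i j) (Suc k) (Cont m n) hs = x * (l + dd d (real m) (real n) +
      ((1-p)*q*Wk d p q l (imit \<sigma> i j) k (Cont 1 0) ((Cont m n,True)#hs) + (p*q*Wk d p q l (imit \<sigma> i j) k (Ende 1 0) ((Cont m n,True)#hs) +
       ((1-p)*(1-q)*Wk d p q l (imit \<sigma> i j) k (Cont 0 1) ((Cont m n,True)#hs) + p*(1-q)*Wk d p q l (imit \<sigma> i j) k (Ende 0 1) ((Cont m n,True)#hs)))))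
    + (1-x) * ((1-p)*q*Wk d p q l (imit \<sigma> i j) k (Cont (m+1) n) ((Cont m n,False)#hs) + (p*q*Wk d p q l (imit \<sigma> i j) k (Ende (m+1) n) ((Cont m n,False)#hs) +
       ((1-p)*(1-q)*Wk d p q l (imit \<sigma> i j) k (Cont m (n+1)) ((Cont m n,False)#hs) + p*(1-q)*Wk d p q l (imit \<sigma> i j) k (Ende m (n+1)) ((Cont m n,False)#hs))))"
    unfolding xe[symmetric]
    by (simp only: Wk.simps(2) st.case trans_def list.map list.simps prod.case sum_list.Cons sum_list.Nil add_0 add_0_right)
  show ?case unfolding L R A1
    by (rule comb_arith[OF x01 p q hD B1 B2 E1 E2 hg])
qed

lemma upper_place:
  assumes p: "0 < p" "p \<le> 1" and q: "0 \<le> q" "q \<le> 1" and l: "l \<ge> 0"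
    and dpos: "\<And>m n. dd d (real m) (real n) \<ge> 0" and d1: "dd d 1 0 = d 1" "dd d 0 1 = d 1"
  shows "Wk d p q l (\<lambda>_ _. 1) k (Cont m n) hs \<le> dd d (real m) (real n) + (l + d 1)/p"
proof (induction k arbitrary: m n hs)
  case 0
  have "d 1 \<ge> 0" using dpos[of 1 0] d1 by simp
  then show ?case using dpos[of m n] p l by simp
next
  case (Suc k)
  define C where "C = (l + d 1)/p"
  have C: "p * C = l + d 1" using p by (simp add: C_def)
  have e: "\<And>hs a b. a + b = 1 \<Longrightarrow> Wk d p q l (\<lambda>_ _. 1) k (Ende a b) hs \<le> d 1"
  proof -
    fix hs and a b :: nat assume "a + b = 1"
    then have "dd d (real a) (real b) = d 1" using d1 by (cases a) auto
    moreover have "d 1 \<ge> 0" using dpos[of 1 0] d1 by simp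
    ultimately show "Wk d p q l (\<lambda>_ _. 1) k (Ende a b) hs \<le> d 1" by (cases k) auto
  qed
  have c1: "\<And>hs. Wk d p q l (\<lambda>_ _. 1) k (Cont 1 0) hs \<le> d 1 + C"
    using Suc.IH[of 1 0] d1 by (simp add: C_def)
  have c2: "\<And>hs. Wk d p q l (\<lambda>_ _. 1) k (Cont 0 1) hs \<le> d 1 + C"
    using Suc.IH[of 0 1] d1 by (simp add: C_def)
  have pr: "0 \<le> (1-p)*q" "0 \<le> p*q" "0 \<le> (1-p)*(1-q)" "0 \<le> p*(1-q)" using p q by auto
  let ?W = "Wk d p q l (\<lambda>_ _. 1) k"
  let ?h = "(Cont m n, True) # hs"
  have "(1-p)*q*?W (Cont 1 0) ?h + (p*q*?W (Ende 1 0) ?h + ((1-p)*(1-q)*?W (Cont 0 1) ?h + p*(1-q)*?W (Ende 0 1) ?h))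
     \<le> (1-p)*q*(d 1 + C) + (p*q*d 1 + ((1-p)*(1-q)*(d 1 + C) + p*(1-q)*d 1))"
    by (intro add_mono mult_left_mono pr c1 c2 e) auto
  also have "\<dots> = d 1 + (1-p)*C" by (simp add: algebra_simps)
  finally have S: "(1-p)*q*?W (Cont 1 0) ?h + (p*q*?W (Ende 1 0) ?h + ((1-p)*(1-q)*?W (Cont 0 1) ?h + p*(1-q)*?W (Ende 0 1) ?h))
     \<le> d 1 + (1-p)*C" .
  have "Wk d p q l (\<lambda>_ _. 1) (Suc k) (Cont m n) hs = l + dd d (real m) (real n) +
     ((1-p)*q*?W (Cont 1 0) ?h + (p*q*?W (Ende 1 0) ?h + ((1-p)*(1-q)*?W (Cont 0 1) ?h + p*(1-q)*?W (Ende 0 1) ?h)))"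
    by (simp add: trans_def)
  also have "\<dots> \<le> l + dd d (real m) (real n) + (d 1 + (1-p)*C)" using S by simp
  also have "\<dots> = dd d (real m) (real n) + C" using C by (simp add: algebra_simps)
  finally show ?case by (simp add: C_def)
qed

lemma total_ge:
  assumes pol: "\<sigma> \<in> policies" and p: "0 < p" "p \<le> 1" and q: "0 \<le> q" "q \<le> 1" and l: "l \<ge> 0"
    and dpos: "\<And>m n. dd d (real m) (real n) \<ge> 0"
    and incr: "\<And>m n. a \<le> m \<Longrightarrow> b \<le> n \<Longrightarrow> dd d (real (m+i)) (real (n+j)) - dd d (real m) (real n) \<ge> \<Delta>"
    and D0: "\<Delta> \<ge> 0"
  shows "total_cost d p q l (imit \<sigma> i j) (Cont a b) + ereal \<Delta> \<le> total_cost d p q l \<sigma> (Cont (a+i) (b+j))"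
proof -
  let ?Wp = "\<lambda>k. Wk d p q l (imit \<sigma> i j) k (Cont a b) []"
  let ?Ws = "\<lambda>k. Wk d p q l \<sigma> k (Cont (a+i) (b+j)) []"
  define S where "S = (SUP k. ereal (?Ws k))"
  have mono: "incseq ?Wp"
    by (intro incseq_SucI W_nonneg_mono[OF imit_pol[OF pol] less_imp_le[OF p(1)] p(2) q l dpos])
  have key: "\<And>k. ?Ws (Suc k) \<ge> ?Wp (Suc k) + \<Delta>*(1-(1-p)^k)"
    using L_sh[OF pol less_imp_le[OF p(1)] p(2) q incr D0, where m=a and n=b and hs="[]" and k="Suc k" for k] by simp
  have each: "ereal (?Wp k0 + \<Delta>) \<le> S" for k0
  proof -
    have lim: "(\<lambda>k. ereal (?Wp k0 + \<Delta>*(1-(1-p)^k))) \<longlonglongrightarrow> ereal (?Wp k0 + \<Delta>*(1-0))"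
      using p by (intro tendsto_intros LIMSEQ_power_zero) auto
    have "\<forall>k\<ge>k0. ereal (?Wp k0 + \<Delta>*(1-(1-p)^k)) \<le> S"
    proof (intro allI impI)
      fix k assume "k0 \<le> k"
      then have "k0 \<le> Suc k" by simp
      then have "?Wp k0 \<le> ?Wp (Suc k)" using mono unfolding incseq_def by blast
      then have "?Wp k0 + \<Delta>*(1-(1-p)^k) \<le> ?Ws (Suc k)" using key[of k] by simp
      also have "ereal (?Ws (Suc k)) \<le> S" unfolding S_def by (rule SUP_upper) simp
      finally show "ereal (?Wp k0 + \<Delta>*(1-(1-p)^k)) \<le> S" by simp
    qed
    then have "ereal (?Wp k0 + \<Delta>*(1-0)) \<le> S" by (intro LIMSEQ_le_const2[OF lim]) auto
    then show ?thesis by simp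
  qed
  have "total_cost d p q l (imit \<sigma> i j) (Cont a b) + ereal \<Delta> = (SUP k. ereal (?Wp k) + ereal \<Delta>)"
    unfolding total_cost_def by (rule SUP_ereal_add_left[symmetric]) auto
  also have "\<dots> \<le> S" using each by (intro SUP_least) simp
  finally show ?thesis unfolding S_def total_cost_def .
qed

lemma J_ineq:
  assumes p: "0 < p" "p \<le> 1" and q: "0 \<le> q" "q \<le> 1" and l: "l \<ge> 0"
    and dpos: "\<And>m n. dd d (real m) (real n) \<ge> 0" and d1: "dd d 1 0 = d 1" "dd d 0 1 = d 1"
    and incr: "\<And>m n. a \<le> m \<Longrightarrow> b \<le> n \<Longrightarrow> dd d (real (m+i)) (real (n+j)) - dd d (real m) (real n) \<ge> \<Delta>"
    and D0: "\<Delta> \<ge> 0"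
  shows "Jopt d p q l a b + \<Delta> \<le> Jopt d p q l (a+i) (b+j)"
proof -
  define I0 where "I0 = (INF \<pi>\<in>policies. total_cost d p q l \<pi> (Cont a b))"
  define I1 where "I1 = (INF \<pi>\<in>policies. total_cost d p q l \<pi> (Cont (a+i) (b+j)))"
  have ge: "I0 + ereal \<Delta> \<le> I1" unfolding I1_def
  proof (rule INF_greatest)
    fix \<sigma> assume s: "\<sigma> \<in> policies"
    have "I0 \<le> total_cost d p q l (imit \<sigma> i j) (Cont a b)" unfolding I0_def
      by (rule INF_lower) (rule imit_pol[OF s])
    then have "I0 + ereal \<Delta> \<le> total_cost d p q l (imit \<sigma> i j) (Cont a b) + ereal \<Delta>"
      by (rule add_right_mono)
    also have "\<dots> \<le> total_cost d p q l \<sigma> (Cont (a+i) (b+j))"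
      by (rule total_ge[OF s p q l dpos incr D0])
    finally show "I0 + ereal \<Delta> \<le> total_cost d p q l \<sigma> (Cont (a+i) (b+j))" .
  qed
  have nn: "0 \<le> I0" unfolding I0_def
  proof (rule INF_greatest)
    fix \<pi> assume "\<pi> \<in> policies"
    have "ereal (Wk d p q l \<pi> 0 (Cont a b) []) \<le> total_cost d p q l \<pi> (Cont a b)"
      unfolding total_cost_def by (rule SUP_upper) simp
    then show "0 \<le> total_cost d p q l \<pi> (Cont a b)" by (simp add: zero_ereal_def)
  qed
  have pol1: "(\<lambda>_ _. 1) \<in> policies" by (simp add: policies_def)
  have fin: "I1 \<le> ereal (dd d (real (a+i)) (real (b+j)) + (l + d 1)/p)"
  proof -
    have "I1 \<le> total_cost d p q l (\<lambda>_ _. 1) (Cont (a+i) (b+j))" unfolding I1_def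
      by (rule INF_lower[OF pol1])
    also have "\<dots> \<le> ereal (dd d (real (a+i)) (real (b+j)) + (l + d 1)/p)"
      unfolding total_cost_def
    proof (intro SUP_least)
      fix k show "ereal (Wk d p q l (\<lambda>_ _. 1) k (Cont (a+i) (b+j)) []) \<le> ereal (dd d (real (a+i)) (real (b+j)) + (l + d 1)/p)"
        using upper_place[OF p q l dpos d1, of k "a+i" "b+j" "[]"] by (simp only: ereal_less_eq)
    qed
    finally show ?thesis .
  qed
  obtain r0 where r0: "I0 = ereal r0" using nn ge fin
    by (cases I0) auto
  obtain r1 where r1: "I1 = ereal r1" using nn ge fin r0
    by (cases I1) auto
  show ?thesis using ge r0 r1 unfolding Jopt_def I0_def[symmetric] I1_def[symmetric] by simp
qed



lemma dd_sym: "dd d x y = dd d y x" by (simp add: dd_def add.commute)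

lemma incr_from_deriv:
  fixes f f' :: "real \<Rightarrow> real"
  assumes "a \<le> b" "\<And>x. ((f has_real_derivative f' x) (at x))" "\<And>x. a < x \<Longrightarrow> x < b \<Longrightarrow> f' x \<ge> 0"
  shows "f a \<le> f b"
proof (rule DERIV_nonneg_imp_increasing_open[OF assms(1)])
  show "\<And>x. a < x \<Longrightarrow> x < b \<Longrightarrow> \<exists>y. DERIV f x :> y \<and> 0 \<le> y" using assms by blast
  show "continuous_on {a..b} f"
    using assms(2) by (intro continuous_at_imp_continuous_on ballI DERIV_isCont) blast
qed

lemma P_mono:
  assumes "C4 d"
  shows "0 \<le> x \<Longrightarrow> x \<le> x' \<Longrightarrow> 0 \<le> y \<Longrightarrow> y \<le> y' \<Longrightarrow>
     dd d (x+1) y - dd d x y \<le> dd d (x'+1) y' - dd d x' y'"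
proof -
  assume x: "0 \<le> x" "x \<le> x'" and y: "0 \<le> y" "y \<le> y'"
  from assms obtain D1 D2 D11 D12 D21 D22 :: "real \<Rightarrow> real \<Rightarrow> real" where
    h1': "\<forall>x y. ((\<lambda>t. dd d t y) has_real_derivative D1 x y) (at x)" and
    h11': "\<forall>x y. ((\<lambda>t. D1 t y) has_real_derivative D11 x y) (at x)" and
    h12': "\<forall>x y. ((\<lambda>t. D1 x t) has_real_derivative D12 x y) (at y)" and
    p11': "\<forall>x\<ge>0. \<forall>y\<ge>0. D11 x y > 0 \<and> D22 x y > 0" and
    p12': "\<forall>x>0. \<forall>y>0. D12 x y > 0"
    unfolding C4_def
    apply (elim conjE exE)
    apply (rule that)
        apply assumption+
    done
  have h1: "\<And>x y. ((\<lambda>t. dd d t y) has_real_derivative D1 x y) (at x)" using h1' by blast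
  have h11: "\<And>x y. ((\<lambda>t. D1 t y) has_real_derivative D11 x y) (at x)" using h11' by blast
  have h12: "\<And>x y. ((\<lambda>t. D1 x t) has_real_derivative D12 x y) (at y)" using h12' by blast
  have p11: "\<And>x y. x \<ge> 0 \<Longrightarrow> y \<ge> 0 \<Longrightarrow> D11 x y > 0" using p11' by blast
  have p12: "\<And>x y. x > 0 \<Longrightarrow> y > 0 \<Longrightarrow> D12 x y > 0" using p12' by blast
  have a: "D1 t1 yy \<le> D1 t2 yy" if t: "0 \<le> t1" "t1 \<le> t2" "0 \<le> yy" for t1 t2 yy
  proof (rule incr_from_deriv[where f="\<lambda>t. D1 t yy" and f'="\<lambda>t. D11 t yy"])
    show "t1 \<le> t2" by (rule t(2))
    show "\<And>x. ((\<lambda>t. D1 t yy) has_real_derivative D11 x yy) (at x)" by (rule h11)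
    fix z assume "t1 < z" "z < t2"
    then show "0 \<le> D11 z yy" using p11[of z yy] t by simp
  qed
  have c: "D1 xx y1 \<le> D1 xx y2" if t: "0 < xx" "0 \<le> y1" "y1 \<le> y2" for xx y1 y2
  proof (rule incr_from_deriv[where f="\<lambda>t. D1 xx t" and f'="\<lambda>t. D12 xx t"])
    show "y1 \<le> y2" by (rule t(3))
    show "\<And>x. ((\<lambda>t. D1 xx t) has_real_derivative D12 xx x) (at x)" by (rule h12)
    fix z assume "y1 < z" "z < y2"
    then show "0 \<le> D12 xx z" using p12[of xx z] t by simp
  qed
  have b: "dd d (x+1) y - dd d x y \<le> dd d (x'+1) y - dd d x' y"
  proof (rule incr_from_deriv[where f="\<lambda>t. dd d (t+1) y - dd d t y" and f'="\<lambda>t. D1 (t+1) y - D1 t y"])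
    show "x \<le> x'" by fact
    fix t
    have "((\<lambda>t. dd d (t+1) y) has_real_derivative D1 (t+1) y) (at t)"
      using DERIV_shift[of "\<lambda>t. dd d t y" "D1 (t+1) y" t 1] h1 by simp
    then show "((\<lambda>t. dd d (t+1) y - dd d t y) has_real_derivative D1 (t+1) y - D1 t y) (at t)"
      by (intro DERIV_diff h1)
    assume "x < t" "t < x'"
    then show "0 \<le> D1 (t+1) y - D1 t y" using a[of t "t+1" y] x y by simp
  qed
  have d: "dd d x' y' - dd d x' y \<le> dd d (x'+1) y' - dd d (x'+1) y"
  proof (rule incr_from_deriv[where f="\<lambda>t. dd d t y' - dd d t y" and f'="\<lambda>t. D1 t y' - D1 t y"])
    show "x' \<le> x'+1" by simp
    fix t
    show "((\<lambda>t. dd d t y' - dd d t y) has_real_derivative D1 t y' - D1 t y) (at t)"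
      by (intro DERIV_diff h1)
    assume "x' < t" "t < x'+1"
    then show "0 \<le> D1 t y' - D1 t y" using c[of t y y'] x y by simp
  qed
  show ?thesis using b d by simp
qed


lemma dd_nat_pos: "C4 d \<Longrightarrow> dd d (real m) (real n) \<ge> 0"
  unfolding C4_def by (auto intro: less_imp_le)

lemma Dmono1: "C4 d \<Longrightarrow> a \<le> m \<Longrightarrow> b \<le> n \<Longrightarrow> Delta1 d a b \<le> Delta1 d m n"
  using P_mono[of d "real a" "real m" "real b" "real n"] unfolding Delta1_def by (simp add: add.commute)

lemma Delta2_eq: "Delta2 d m n = Delta1 d n m"
  unfolding Delta1_def Delta2_def by (simp add: dd_sym[of d "real m"])

lemma Dmono2: "C4 d \<Longrightarrow> a \<le> m \<Longrightarrow> b \<le> n \<Longrightarrow> Delta2 d a b \<le> Delta2 d m n"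
  unfolding Delta2_eq by (rule Dmono1)

lemma D1nn: assumes "C2 d" shows "Delta1 d a b \<ge> 0"
proof -
  have "sqrt ((real a)\<^sup>2 + (real b)\<^sup>2) \<le> sqrt ((real (a+1))\<^sup>2 + (real b)\<^sup>2)"
    by (intro real_sqrt_le_mono add_right_mono power_mono) auto
  then have "d (sqrt ((real a)\<^sup>2 + (real b)\<^sup>2)) \<le> d (sqrt ((real (a+1))\<^sup>2 + (real b)\<^sup>2))"
    using assms unfolding C2_def by (intro mono_onD[of "{0..}" d]) auto
  then show ?thesis unfolding Delta1_def dd_def by simp
qed

lemma D2nn: "C2 d \<Longrightarrow> Delta2 d a b \<ge> 0" unfolding Delta2_eq by (rule D1nn)

lemma J1:
  assumes A: "0 < p" "p < 1" "0 \<le> q" "q \<le> 1" "l > 0" "C2 d" "C4 d"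
  shows "Jopt d p q l a b + Delta1 d a b \<le> Jopt d p q l (a+1) b"
proof -
  have d1: "dd d 1 0 = d 1" "dd d 0 1 = d 1" by (simp_all add: dd_def)
  have incr: "\<And>m n. a \<le> m \<Longrightarrow> b \<le> n \<Longrightarrow> dd d (real (m+1)) (real (n+0)) - dd d (real m) (real n) \<ge> Delta1 d a b"
  proof -
    fix m n assume "a \<le> m" "b \<le> n"
    from Dmono1[OF A(7) this] show "dd d (real (m+1)) (real (n+0)) - dd d (real m) (real n) \<ge> Delta1 d a b"
      unfolding Delta1_def[of d m n] by simp
  qed
  have "Jopt d p q l a b + Delta1 d a b \<le> Jopt d p q l (a+1) (b+0)"
    by (rule J_ineq[OF A(1) less_imp_le[OF A(2)] A(3) A(4) less_imp_le[OF A(5)] dd_nat_pos[OF A(7)] d1 incr D1nn[OF A(6)]])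
  then show ?thesis by simp
qed

lemma J2:
  assumes A: "0 < p" "p < 1" "0 \<le> q" "q \<le> 1" "l > 0" "C2 d" "C4 d"
  shows "Jopt d p q l a b + Delta2 d a b \<le> Jopt d p q l a (b+1)"
proof -
  have d1: "dd d 1 0 = d 1" "dd d 0 1 = d 1" by (simp_all add: dd_def)
  have incr: "\<And>m n. a \<le> m \<Longrightarrow> b \<le> n \<Longrightarrow> dd d (real (m+0)) (real (n+1)) - dd d (real m) (real n) \<ge> Delta2 d a b"
  proof -
    fix m n assume "a \<le> m" "b \<le> n"
    from Dmono2[OF A(7) this] show "dd d (real (m+0)) (real (n+1)) - dd d (real m) (real n) \<ge> Delta2 d a b"
      unfolding Delta2_def[of d m n] by simp
  qed
  have "Jopt d p q l a b + Delta2 d a b \<le> Jopt d p q l (a+0) (b+1)"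
    by (rule J_ineq[OF A(1) less_imp_le[OF A(2)] A(3) A(4) less_imp_le[OF A(5)] dd_nat_pos[OF A(7)] d1 incr D2nn[OF A(6)]])
  then show ?thesis by simp
qed

lemma stepP1:
  assumes A: "0 < p" "p < 1" "0 \<le> q" "q \<le> 1" "l > 0" "C2 d" "C4 d"
    and P: "(m,n) \<in> Pset d p q l"
  shows "(m+1,n) \<in> Pset d p q l"
proof -
  let ?J = "Jopt d p q l"
  have a: "?J (m+1+1) n - ?J (m+1) n \<ge> Delta1 d (m+1) n" using J1[OF A, of "m+1" n] by simp
  have b: "?J (m+1) (n+1) - ?J m (n+1) \<ge> Delta1 d m (n+1)" using J1[OF A, of m "n+1"] by simp
  have M1: "Delta1 d (m+1) n \<ge> Delta1 d m n" by (rule Dmono1[OF A(7)]) auto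
  have M2: "Delta1 d m (n+1) \<ge> Delta1 d m n" by (rule Dmono1[OF A(7)]) auto
  have pr: "0 \<le> (1-p)*q" "0 \<le> p*q" "0 \<le> (1-p)*(1-q)" "0 \<le> p*(1-q)" using A by auto
  have ecp: "c_p d p q l (m+1) n = c_p d p q l m n + Delta1 d m n"
    unfolding c_p_def Delta1_def by simp
  have enp: "c_np d p q l (m+1) n = c_np d p q l m n + (1-p)*q*(?J (m+1+1) n - ?J (m+1) n)
     + (1-p)*(1-q)*(?J (m+1) (n+1) - ?J m (n+1)) + p*q*Delta1 d (m+1) n + p*(1-q)*Delta1 d m (n+1)"
    unfolding c_np_def Delta1_def right_diff_distrib by linarith
  have "(1-p)*q*(?J (m+1+1) n - ?J (m+1) n) \<ge> (1-p)*q*Delta1 d m n"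
    using a M1 pr by (intro mult_left_mono) auto
  moreover have "(1-p)*(1-q)*(?J (m+1) (n+1) - ?J m (n+1)) \<ge> (1-p)*(1-q)*Delta1 d m n"
    using b M2 pr by (intro mult_left_mono) auto
  moreover have "p*q*Delta1 d (m+1) n \<ge> p*q*Delta1 d m n" using M1 pr by (intro mult_left_mono) auto
  moreover have "p*(1-q)*Delta1 d m (n+1) \<ge> p*(1-q)*Delta1 d m n" using M2 pr by (intro mult_left_mono) auto
  moreover have "(1-p)*q*Delta1 d m n + (1-p)*(1-q)*Delta1 d m n + p*q*Delta1 d m n + p*(1-q)*Delta1 d m n = Delta1 d m n"
    by (simp add: algebra_simps)
  ultimately have "c_np d p q l (m+1) n \<ge> c_np d p q l m n + Delta1 d m n" unfolding enp by linarith
  then show ?thesis using P ecp unfolding Pset_def by simp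
qed

lemma stepP2:
  assumes A: "0 < p" "p < 1" "0 \<le> q" "q \<le> 1" "l > 0" "C2 d" "C4 d"
    and P: "(m,n) \<in> Pset d p q l"
  shows "(m,n+1) \<in> Pset d p q l"
proof -
  let ?J = "Jopt d p q l"
  have a: "?J (m+1) (n+1) - ?J (m+1) n \<ge> Delta2 d (m+1) n" using J2[OF A, of "m+1" n] by simp
  have b: "?J m (n+1+1) - ?J m (n+1) \<ge> Delta2 d m (n+1)" using J2[OF A, of m "n+1"] by simp
  have M1: "Delta2 d (m+1) n \<ge> Delta2 d m n" by (rule Dmono2[OF A(7)]) auto
  have M2: "Delta2 d m (n+1) \<ge> Delta2 d m n" by (rule Dmono2[OF A(7)]) auto
  have pr: "0 \<le> (1-p)*q" "0 \<le> p*q" "0 \<le> (1-p)*(1-q)" "0 \<le> p*(1-q)" using A by auto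
  have ecp: "c_p d p q l m (n+1) = c_p d p q l m n + Delta2 d m n"
    unfolding c_p_def Delta2_def by simp
  have enp: "c_np d p q l m (n+1) = c_np d p q l m n + (1-p)*q*(?J (m+1) (n+1) - ?J (m+1) n)
     + (1-p)*(1-q)*(?J m (n+1+1) - ?J m (n+1)) + p*q*Delta2 d (m+1) n + p*(1-q)*Delta2 d m (n+1)"
    unfolding c_np_def Delta2_def right_diff_distrib by linarith
  have "(1-p)*q*(?J (m+1) (n+1) - ?J (m+1) n) \<ge> (1-p)*q*Delta2 d m n"
    using a M1 pr by (intro mult_left_mono) auto
  moreover have "(1-p)*(1-q)*(?J m (n+1+1) - ?J m (n+1)) \<ge> (1-p)*(1-q)*Delta2 d m n"
    using b M2 pr by (intro mult_left_mono) auto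
  moreover have "p*q*Delta2 d (m+1) n \<ge> p*q*Delta2 d m n" using M1 pr by (intro mult_left_mono) auto
  moreover have "p*(1-q)*Delta2 d m (n+1) \<ge> p*(1-q)*Delta2 d m n" using M2 pr by (intro mult_left_mono) auto
  moreover have "(1-p)*q*Delta2 d m n + (1-p)*(1-q)*Delta2 d m n + p*q*Delta2 d m n + p*(1-q)*Delta2 d m n = Delta2 d m n"
    by (simp add: algebra_simps)
  ultimately have "c_np d p q l m (n+1) \<ge> c_np d p q l m n + Delta2 d m n" unfolding enp by linarith
  then show ?thesis using P ecp unfolding Pset_def by simp
qed

lemma Dq_mono: assumes "C4 d" "0 \<le> q" "q \<le> 1" "a \<le> m" "b \<le> n"
  shows "Deltaq d q a b \<le> Deltaq d q m n"
proof -
  have "q * Delta1 d a b \<le> q * Delta1 d m n" by (rule mult_left_mono[OF Dmono1[OF assms(1,4,5)] assms(2)])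
  moreover have "(1-q) * Delta2 d a b \<le> (1-q) * Delta2 d m n"
    using assms(3) by (intro mult_left_mono[OF Dmono2[OF assms(1,4,5)]]) simp
  ultimately show ?thesis unfolding Deltaq_def by (rule add_mono)
qed

theorem mainTheorem10:
  fixes d :: "real \<Rightarrow> real" and p q l :: real and m n k :: nat
  assumes "0 < p" "p < 1" "0 \<le> q" "q \<le> 1" "l > 0"
    and "C1 d" "C2 d" "C3 d" "C4 d"
  shows "((m,n) \<in> Pset d p q l \<longrightarrow> (m+k,n) \<in> Pset d p q l \<and> (m,n+k) \<in> Pset d p q l)
       \<and> ((m,n) \<in> OSLAset d p q l \<longrightarrow> (m+k,n) \<in> OSLAset d p q l \<and> (m,n+k) \<in> OSLAset d p q l)"
proof (intro conjI impI)
  note A = assms(1-5) assms(7) assms(9)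
  assume P: "(m,n) \<in> Pset d p q l"
  show "(m+k,n) \<in> Pset d p q l"
  proof (induction k)
    case 0 show ?case using P by simp
  next
    case (Suc k) show ?case using stepP1[OF A Suc.IH] by simp
  qed
  show "(m,n+k) \<in> Pset d p q l"
  proof (induction k)
    case 0 show ?case using P by simp
  next
    case (Suc k) show ?case using stepP2[OF A Suc.IH] by simp
  qed
next
  assume O: "(m,n) \<in> OSLAset d p q l"
  show "(m+k,n) \<in> OSLAset d p q l"
  proof -
    have "Deltaq d q m n \<le> Deltaq d q (m+k) n" by (rule Dq_mono[OF assms(9,3,4)]) auto
    then show ?thesis using O unfolding OSLAset_def by simp
  qed
  show "(m,n+k) \<in> OSLAset d p q l"
  proof -
    have "Deltaq d q m n \<le> Deltaq d q m (n+k)" by (rule Dq_mono[OF assms(9,3,4)]) auto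
    then show ?thesis using O unfolding OSLAset_def by simp
  qed
qed

end
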